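(* Let $p>1$, $1/p+1/q=1$, let $\{(x_i,y_i)\}_{i=1}^n\subset\mathbb{R}^d\times\{\pm1\}$ be linearly separable with $\max_i\|x_i\|_q<C$, and let $L(w)=\frac1n\sum_i\ell(y_i\langle w,x_i\rangle)$ with $\ell$ decreasing, convex, not attaining its minimum, $\inf\ell=0$. If the regularized direction $\bar w^{\mathrm{reg}}_p$ exists, then for every $\alpha>0$ there exists $r_\alpha$ such that for every $w\in\mathbb{R}^d$ with $\|w\|_p>r_\alpha$, $$L\big((1+\alpha)\|w\|_p\,\bar w^{\mathrm{reg}}_p\big)\le L(w).$$
   Context: The regularization path is $\bar w_p(B)=\arg\min_{\|w\|_p\le B}L(w)$ for $B>0$; if $\lim_{B\to\infty}\bar w_p(B)/B$ exists it is called the regularized direction $\bar w^{\mathrm{reg}}_p$. *)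

theory Defs
  imports "HOL-Analysis.Analysis"
begin

definition lp_norm :: "real \<Rightarrow> real ^ 'd \<Rightarrow> real" where
  "lp_norm p w = (\<Sum>i\<in>UNIV. \<bar>w $ i\<bar> powr p) powr (1 / p)"

definition emp_loss ::
  "(real \<Rightarrow> real) \<Rightarrow> nat \<Rightarrow> (nat \<Rightarrow> real ^ 'd) \<Rightarrow> (nat \<Rightarrow> real) \<Rightarrow> real ^ 'd \<Rightarrow> real" where
  "emp_loss l n x y w = (1 / real n) * (\<Sum>i<n. l (y i * (w \<bullet> x i)))"

definition lin_separable :: "nat \<Rightarrow> (nat \<Rightarrow> real ^ 'd) \<Rightarrow> (nat \<Rightarrow> real) \<Rightarrow> bool" where
  "lin_separable n x y \<longleftrightarrow> (\<exists>w. \<forall>i<n. y i * (w \<bullet> x i) > 0)"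

definition is_reg_path ::
  "real \<Rightarrow> (real ^ 'd \<Rightarrow> real) \<Rightarrow> (real \<Rightarrow> real ^ 'd) \<Rightarrow> bool" where
  "is_reg_path p L wbar \<longleftrightarrow>
     (\<forall>B>0. lp_norm p (wbar B) \<le> B \<and> (\<forall>w. lp_norm p w \<le> B \<longrightarrow> L (wbar B) \<le> L w))"

end

theory Submission
  imports Defs
begin


lemma lp_norm_nonneg: "0 \<le> lp_norm p w"
  unfolding lp_norm_def by simp

lemma lp_norm_scale:
  assumes "p > 0" "c \<ge> 0"
  shows "lp_norm p (c *\<^sub>R w) = c * lp_norm p w"
proof -
  have "(\<Sum>i\<in>UNIV. \<bar>(c *\<^sub>R w) $ i\<bar> powr p) = c powr p * (\<Sum>i\<in>UNIV. \<bar>w $ i\<bar> powr p)"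
    using assms by (simp add: abs_mult powr_mult sum_distrib_left)
  then have "lp_norm p (c *\<^sub>R w) = (c powr p) powr (1/p) * (\<Sum>i\<in>UNIV. \<bar>w $ i\<bar> powr p) powr (1/p)"
    unfolding lp_norm_def by (simp add: powr_mult)
  also have "(c powr p) powr (1/p) = c"
    using assms by (simp add: powr_powr)
  finally show ?thesis unfolding lp_norm_def by simp
qed

lemma lp_norm_zero: "p > 0 \<Longrightarrow> lp_norm p 0 = 0"
  unfolding lp_norm_def by simp

lemma lp_norm_le_iff:
  assumes "p > 0" "R \<ge> 0"
  shows "lp_norm p w \<le> R \<longleftrightarrow> (\<Sum>i\<in>UNIV. \<bar>w $ i\<bar> powr p) \<le> R powr p"
proof
  let ?S = "(\<Sum>i\<in>UNIV. \<bar>w $ i\<bar> powr p)"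
  have S0: "?S \<ge> 0" by (simp add: sum_nonneg)
  assume "lp_norm p w \<le> R"
  then have "(?S powr (1/p)) powr p \<le> R powr p"
    unfolding lp_norm_def using assms by (intro powr_mono2) auto
  then show "?S \<le> R powr p" using assms S0 by (simp add: powr_powr)
next
  let ?S = "(\<Sum>i\<in>UNIV. \<bar>w $ i\<bar> powr p)"
  have S0: "?S \<ge> 0" by (simp add: sum_nonneg)
  assume "?S \<le> R powr p"
  then have "?S powr (1/p) \<le> (R powr p) powr (1/p)"
    using assms S0 by (intro powr_mono2) auto
  then show "lp_norm p w \<le> R" unfolding lp_norm_def using assms by (simp add: powr_powr)
qed

lemma powr_convex0:
  fixes a b t p :: real
  assumes "p \<ge> 1" "0 \<le> a" "0 \<le> b" "0 \<le> t" "t \<le> 1"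
  shows "(t * a + (1 - t) * b) powr p \<le> t * a powr p + (1 - t) * b powr p"
proof -
  have key: "(s * c) powr p \<le> s * c powr p" if "0 \<le> s" "s \<le> 1" "0 \<le> c" for s c :: real
  proof -
    have "s powr p \<le> s powr 1" using that assms by (intro powr_mono') auto
    then have "s powr p \<le> s" using that by simp
    then show ?thesis using that by (simp add: powr_mult mult_right_mono)
  qed
  show ?thesis
  proof (cases "a = 0 \<or> b = 0")
    case True
    then show ?thesis
    proof
      assume "a = 0"
      then show ?thesis using key[of "1 - t" b] assms by simp
    next
      assume "b = 0"
      then show ?thesis using key[of t a] assms by simp
    qed
  next
    case False
    then have "a > 0" "b > 0" using assms by auto
    have "convex_on {0<..} (\<lambda>x::real. x powr p)" using powr_convex assms by blast
    from convex_onD[OF this, of "1 - t" a b] assms \<open>a > 0\<close> \<open>b > 0\<close>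
    show ?thesis by (simp add: algebra_simps)
  qed
qed

lemma lp_ball_convex:
  assumes "p \<ge> 1" "R \<ge> 0" "lp_norm p a \<le> R" "lp_norm p b \<le> R" "0 \<le> t" "t \<le> 1"
  shows "lp_norm p (t *\<^sub>R a + (1 - t) *\<^sub>R b) \<le> R"
proof -
  have p0: "p > 0" using assms by simp
  have "(\<Sum>i\<in>UNIV. \<bar>(t *\<^sub>R a + (1 - t) *\<^sub>R b) $ i\<bar> powr p)
      \<le> (\<Sum>i\<in>UNIV. t * \<bar>a $ i\<bar> powr p + (1 - t) * \<bar>b $ i\<bar> powr p)"
  proof (rule sum_mono)
    fix i
    have "\<bar>(t *\<^sub>R a + (1 - t) *\<^sub>R b) $ i\<bar> \<le> t * \<bar>a $ i\<bar> + (1 - t) * \<bar>b $ i\<bar>"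
      using assms by (simp add: abs_triangle_ineq[THEN order_trans] abs_mult)
    then have "\<bar>(t *\<^sub>R a + (1 - t) *\<^sub>R b) $ i\<bar> powr p \<le> (t * \<bar>a $ i\<bar> + (1 - t) * \<bar>b $ i\<bar>) powr p"
      using assms by (intro powr_mono2) auto
    also have "\<dots> \<le> t * \<bar>a $ i\<bar> powr p + (1 - t) * \<bar>b $ i\<bar> powr p"
      using assms by (intro powr_convex0) auto
    finally show "\<bar>(t *\<^sub>R a + (1 - t) *\<^sub>R b) $ i\<bar> powr p \<le> t * \<bar>a $ i\<bar> powr p + (1 - t) * \<bar>b $ i\<bar> powr p" .
  qed
  also have "\<dots> = t * (\<Sum>i\<in>UNIV. \<bar>a $ i\<bar> powr p) + (1 - t) * (\<Sum>i\<in>UNIV. \<bar>b $ i\<bar> powr p)"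
    by (simp add: sum.distrib sum_distrib_left)
  also have "\<dots> \<le> t * R powr p + (1 - t) * R powr p"
    using assms lp_norm_le_iff[OF p0 assms(2)] by (intro add_mono mult_left_mono) auto
  also have "\<dots> = R powr p" by (simp add: algebra_simps)
  finally show ?thesis using lp_norm_le_iff[OF p0 assms(2)] by blast
qed

lemma div_swap: "((u::real) - v) / (a - b) = (v - u) / (b - a)"
  by (metis minus_diff_eq minus_divide_divide)

lemma slope_mono:
  fixes l :: "real \<Rightarrow> real"
  assumes cvx: "convex_on UNIV l" and "a < b" "c < d" "a \<le> c" "b \<le> d"
  shows "(l b - l a) / (b - a) \<le> (l d - l c) / (d - c)"
proof -
  have s1: "(l b - l a) / (b - a) \<le> (l d - l a) / (d - a)"
  proof (cases "b = d")
    case False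
    then have "b < d" using assms by simp
    from convex_on_slope_le(1)[OF cvx _ _ \<open>a < b\<close> this] show ?thesis
      by (simp add: div_swap)
  qed simp
  have s2: "(l d - l a) / (d - a) \<le> (l d - l c) / (d - c)"
  proof (cases "a = c")
    case False
    then have "a < c" using assms by simp
    from convex_on_slope_le(2)[OF cvx _ _ this \<open>c < d\<close>] show ?thesis
      by (simp add: div_swap)
  qed simp
  from s1 s2 show ?thesis by linarith
qed

lemma chord_le:
  fixes l :: "real \<Rightarrow> real"
  assumes cvx: "convex_on UNIV l" and "a < b" "b \<le> c" "c < d"
  shows "(l c - l d) * (b - a) \<le> (l a - l b) * (d - c)"
proof -
  have "(l b - l a) / (b - a) \<le> (l d - l c) / (d - c)"
    using slope_mono[OF cvx, of a b c d] assms by simp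
  then have "(l b - l a) * (d - c) \<le> (l d - l c) * (b - a)"
    using assms by (simp add: divide_simps)
  then show ?thesis by (simp add: algebra_simps)
qed

lemma shift_le:
  fixes l :: "real \<Rightarrow> real"
  assumes cvx: "convex_on UNIV l" and "0 \<le> h" "x \<le> x'"
  shows "l x' - l (x' + h) \<le> l x - l (x + h)"
proof (cases "h = 0")
  case False
  then have h: "h > 0" using assms by simp
  have "(l (x + h) - l x) / (x + h - x) \<le> (l (x' + h) - l x') / (x' + h - x')"
    using slope_mono[OF cvx, of x "x + h" x' "x' + h"] assms h by simp
  then show ?thesis using h by (simp add: divide_simps)
qed simp

lemma strict_decr:
  fixes l :: "real \<Rightarrow> real"
  assumes cvx: "convex_on UNIV l" and decr: "antimono l" and nm: "\<forall>t. \<exists>s. l s < l t"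
    and "a < b"
  shows "l b < l a"
proof (rule ccontr)
  assume "\<not> l b < l a"
  moreover have "l b \<le> l a" using decr \<open>a < b\<close> by (simp add: antimono_def)
  ultimately have eq: "l b = l a" by simp
  have "l b \<le> l t" for t
  proof (cases "t \<le> b")
    case True then show ?thesis using decr by (simp add: antimono_def)
  next
    case False
    have "(l b - l a) / (b - a) \<le> (l t - l b) / (t - b)"
      using slope_mono[OF cvx, of a b b t] \<open>a < b\<close> False by simp
    then show ?thesis using eq False by (simp add: divide_simps split: if_splits)
  qed
  with nm show False by (meson not_less)
qed

lemma emp_loss_z:
  "emp_loss l n x y w = (1 / real n) * (\<Sum>i<n. l (w \<bullet> (y i *\<^sub>R x i)))"
  unfolding emp_loss_def by (simp add: inner_scaleR_right)

lemma emp_loss_convex: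
  fixes l :: "real \<Rightarrow> real" and x :: "nat \<Rightarrow> real ^ 'd"
  assumes cvx: "convex_on UNIV l"
  shows "convex_on UNIV (emp_loss l n x y)"
proof (rule convex_onI)
  fix t :: real and a b :: "real ^ 'd"
  assume t: "0 < t" "t < 1"
  have "(\<Sum>i<n. l (((1 - t) *\<^sub>R a + t *\<^sub>R b) \<bullet> (y i *\<^sub>R x i)))
      \<le> (\<Sum>i<n. (1 - t) * l (a \<bullet> (y i *\<^sub>R x i)) + t * l (b \<bullet> (y i *\<^sub>R x i)))"
  proof (rule sum_mono)
    fix i
    have "l ((1 - t) *\<^sub>R (a \<bullet> (y i *\<^sub>R x i)) + t *\<^sub>R (b \<bullet> (y i *\<^sub>R x i)))
       \<le> (1 - t) * l (a \<bullet> (y i *\<^sub>R x i)) + t * l (b \<bullet> (y i *\<^sub>R x i))"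
      using t by (intro convex_onD[OF cvx]) auto
    then show "l (((1 - t) *\<^sub>R a + t *\<^sub>R b) \<bullet> (y i *\<^sub>R x i))
       \<le> (1 - t) * l (a \<bullet> (y i *\<^sub>R x i)) + t * l (b \<bullet> (y i *\<^sub>R x i))"
      by (simp add: inner_add_left algebra_simps)
  qed
  then have "(1 / real n) * (\<Sum>i<n. l (((1 - t) *\<^sub>R a + t *\<^sub>R b) \<bullet> (y i *\<^sub>R x i)))
      \<le> (1 / real n) * (\<Sum>i<n. (1 - t) * l (a \<bullet> (y i *\<^sub>R x i)) + t * l (b \<bullet> (y i *\<^sub>R x i)))"
    by (intro mult_left_mono) auto
  also have "\<dots> = (1 / real n) * ((1 - t) * (\<Sum>i<n. l (a \<bullet> (y i *\<^sub>R x i)))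
       + t * (\<Sum>i<n. l (b \<bullet> (y i *\<^sub>R x i))))"
    by (simp only: sum.distrib sum_distrib_left)
  also have "\<dots> = (1 - t) * ((1 / real n) * (\<Sum>i<n. l (a \<bullet> (y i *\<^sub>R x i))))
       + t * ((1 / real n) * (\<Sum>i<n. l (b \<bullet> (y i *\<^sub>R x i))))"
    by (simp add: algebra_simps add_divide_distrib[symmetric] diff_divide_distrib[symmetric])
  finally show "emp_loss l n x y ((1 - t) *\<^sub>R a + t *\<^sub>R b)
      \<le> (1 - t) * emp_loss l n x y a + t * emp_loss l n x y b"
    by (simp add: emp_loss_z)
qed simp

lemma emp_loss_cont:
  fixes l :: "real \<Rightarrow> real"
  assumes cont: "continuous_on UNIV l"
  shows "continuous_on UNIV (emp_loss l n x y)"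
  unfolding emp_loss_def
  by (intro continuous_on_mult_left continuous_on_sum)
    (auto intro!: continuous_intros continuous_on_compose2[OF cont])




context
  fixes p :: real and n :: nat and x :: "nat \<Rightarrow> real ^ 'd" and y :: "nat \<Rightarrow> real"
    and l :: "real \<Rightarrow> real" and wbar :: "real \<Rightarrow> real ^ 'd" and wreg :: "real ^ 'd"
  assumes p1: "p > 1" and npos: "n > 0"
    and decr: "antimono l" and cvx: "convex_on UNIV l" and no_min: "\<forall>t. \<exists>s. l s < l t"
    and path: "is_reg_path p (emp_loss l n x y) wbar"
    and dir: "((\<lambda>B. (1 / B) *\<^sub>R wbar B) \<longlongrightarrow> wreg) at_top"
begin

definition "zz i = y i *\<^sub>R x i"
abbreviation "LL \<equiv> emp_loss l n x y"
definition "aa B i = ((1 / B) *\<^sub>R wbar B) \<bullet> zz i"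
definition "mm i = wreg \<bullet> zz i"

lemma L_z: "LL w = (1 / real n) * (\<Sum>i<n. l (w \<bullet> zz i))"
  by (simp add: emp_loss_z zz_def)

lemma l_mono: "s \<le> t \<Longrightarrow> l t \<le> l s"
  using decr by (simp add: antimono_def)

lemma opt: "B > 0 \<Longrightarrow> lp_norm p w \<le> B \<Longrightarrow> LL (wbar B) \<le> LL w"
  using path unfolding is_reg_path_def by blast

lemma norm_wbar: "B > 0 \<Longrightarrow> lp_norm p (wbar B) \<le> B"
  using path unfolding is_reg_path_def by blast

lemma wbar_z: "B > 0 \<Longrightarrow> wbar B \<bullet> zz i = B * aa B i"
  by (simp add: aa_def inner_scaleR_left del: inner_scaleR_right)

lemma L_wbar: "B > 0 \<Longrightarrow> LL (wbar B) = (1 / real n) * (\<Sum>i<n. l (B * aa B i))"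
  by (simp add: L_z wbar_z)

lemma L_wreg: "LL (T *\<^sub>R wreg) = (1 / real n) * (\<Sum>i<n. l (T * mm i))"
  by (simp add: L_z mm_def)

lemma a_tendsto: "((\<lambda>B. aa B i) \<longlongrightarrow> mm i) at_top"
  unfolding aa_def mm_def by (intro tendsto_intros dir)

lemma sum_le_from_L:
  assumes "(1 / real n) * (\<Sum>i<n. f i) \<le> (1 / real n) * (\<Sum>i<n. g i)"
  shows "(\<Sum>i<n. f i) \<le> (\<Sum>i<n. g i)"
  using assms npos by (simp add: divide_simps)

lemma separator:
  assumes "lin_separable n x y"
  obtains u \<gamma> where "lp_norm p u \<le> 1" "\<gamma> > 0" "\<forall>i<n. \<gamma> \<le> u \<bullet> zz i"
proof -
  obtain w0 where w0: "\<forall>i<n. y i * (w0 \<bullet> x i) > 0"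
    using assms unfolding lin_separable_def by blast
  define N where "N = lp_norm p w0 + 1"
  have N: "N > 0" "lp_norm p w0 \<le> N" using lp_norm_nonneg[of p w0] by (auto simp: N_def)
  define u where "u = (1 / N) *\<^sub>R w0"
  have "lp_norm p u = lp_norm p w0 / N"
    unfolding u_def using p1 N by (subst lp_norm_scale) auto
  then have u1: "lp_norm p u \<le> 1" using N by simp
  define \<gamma> where "\<gamma> = Min ((\<lambda>i. u \<bullet> zz i) ` {..<n})"
  have pos: "\<forall>i<n. u \<bullet> zz i > 0"
    using w0 N by (simp add: u_def zz_def inner_scaleR_left inner_scaleR_right)
  have "\<gamma> \<in> (\<lambda>i. u \<bullet> zz i) ` {..<n}"
    unfolding \<gamma>_def using npos by (intro Min_in) auto
  then have g0: "\<gamma> > 0" using pos by auto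
  have "\<forall>i<n. \<gamma> \<le> u \<bullet> zz i" unfolding \<gamma>_def by (auto intro: Min_le)
  with u1 g0 show ?thesis using that by blast
qed

lemma M_bound: "\<exists>M>0. \<forall>\<^sub>F B in at_top. \<forall>i<n. aa B i \<le> M"
proof -
  define M where "M = Max ((\<lambda>i. mm i + 1) ` {..<n})"
  have M1: "\<forall>i<n. mm i + 1 \<le> M" unfolding M_def by (auto intro: Max_ge)
  have "M \<in> (\<lambda>i. mm i + 1) ` {..<n}" unfolding M_def using npos by (intro Max_in) auto
  define M' where "M' = max M 1"
  have "\<forall>\<^sub>F B in at_top. \<forall>i\<in>{..<n}. aa B i < mm i + 1"
    by (intro eventually_ball_finite ballI order_tendstoD(2)[OF a_tendsto]) auto
  then have "\<forall>\<^sub>F B in at_top. \<forall>i<n. aa B i < mm i + 1" by (rule eventually_mono) auto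
  then have "\<forall>\<^sub>F B in at_top. \<forall>i<n. aa B i \<le> M'"
    by eventually_elim (use M1 in \<open>fastforce simp: M'_def\<close>)
  then show ?thesis by (intro exI[of _ M']) (auto simp: M'_def)
qed

lemma pert:
  assumes u1: "lp_norm p u \<le> 1" and g0: "\<gamma> > 0" and ug: "\<forall>i<n. \<gamma> \<le> u \<bullet> zz i"
    and B0: "B > 0" and M0: "M \<ge> 0" and aM: "\<forall>i<n. \<gamma> < aa B i \<longrightarrow> aa B i \<le> M"
    and d0: "0 < \<delta>" and d1: "\<delta> \<le> 1/2" and j: "j < n" and aj: "aa B j \<le> \<gamma>/2"
  shows "l (B * aa B j) - l (B * aa B j + B * \<delta> * \<gamma> / 2)
         \<le> real n * (l (B * \<gamma> / 2) - l (B * \<gamma> / 2 + B * \<delta> * M))"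
proof -
  define w' where "w' = (1 - \<delta>) *\<^sub>R wbar B + (1 - (1 - \<delta>)) *\<^sub>R (B *\<^sub>R u)"
  have nBu: "lp_norm p (B *\<^sub>R u) \<le> B"
    using lp_norm_scale[of p B u] p1 B0 u1 by (simp add: mult_left_le)
  have "lp_norm p w' \<le> B"
    unfolding w'_def using p1 B0 d0 d1 norm_wbar[OF B0] nBu
    by (intro lp_ball_convex) auto
  then have "LL (wbar B) \<le> LL w'" using opt[OF B0] by blast
  then have "(1 / real n) * (\<Sum>i<n. l (B * aa B i)) \<le> (1 / real n) * (\<Sum>i<n. l (w' \<bullet> zz i))"
    by (simp only: L_wbar[OF B0] L_z[of w'])
  then have "(\<Sum>i<n. l (B * aa B i)) \<le> (\<Sum>i<n. l (w' \<bullet> zz i))" by (rule sum_le_from_L)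
  moreover have wz: "w' \<bullet> zz i = (1 - \<delta>) * (B * aa B i) + \<delta> * (B * (u \<bullet> zz i))" for i
  proof -
    have "w' \<bullet> zz i = (1 - \<delta>) * (wbar B \<bullet> zz i) + \<delta> * (B * (u \<bullet> zz i))"
      unfolding w'_def by (simp only: inner_add_left inner_scaleR_left) simp
    then show ?thesis using wbar_z[OF B0] by simp
  qed
  ultimately have "(\<Sum>i<n. l (B * aa B i)) \<le> (\<Sum>i<n. l (w' \<bullet> zz i))" by simp
  then have S: "0 \<le> (\<Sum>i<n. l (w' \<bullet> zz i) - l (B * aa B i))"
    by (simp add: sum_subtractf)
  define \<Delta> where "\<Delta> = l (B * \<gamma> / 2) - l (B * \<gamma> / 2 + B * \<delta> * M)"
  define G where "G = l (B * aa B j) - l (B * aa B j + B * \<delta> * \<gamma> / 2)"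
  have D0: "\<Delta> \<ge> 0" unfolding \<Delta>_def using B0 d0 M0 by (intro diff_ge_0_iff_ge[THEN iffD2] l_mono) simp
  have di: "l (w' \<bullet> zz i) - l (B * aa B i) \<le> \<Delta>" if i: "i < n" for i
  proof (cases "aa B i \<le> u \<bullet> zz i")
    case True
    have "B * aa B i \<le> w' \<bullet> zz i"
    proof -
      have "B * aa B i \<le> B * (u \<bullet> zz i)" using mult_left_mono[OF True, of B] B0 by simp
      then have "\<delta> * (B * aa B i) \<le> \<delta> * (B * (u \<bullet> zz i))" using d0 by (simp add: mult_left_mono)
      then show ?thesis unfolding wz by (simp add: algebra_simps)
    qed
    then show ?thesis using l_mono D0 by fastforce
  next
    case False
    then have ai: "aa B i > \<gamma>" using ug i by force
    then have aiM: "aa B i \<le> M" using aM i by blast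
    have "(1 - \<delta>) * (B * aa B i) \<le> w' \<bullet> zz i"
    proof -
      have "0 \<le> \<delta> * (B * (u \<bullet> zz i))" using ug i B0 d0 g0
        by (metis less_eq_real_def mult_nonneg_nonneg order_trans)
      then show ?thesis unfolding wz by simp
    qed
    then have "l (w' \<bullet> zz i) - l (B * aa B i) \<le> l ((1 - \<delta>) * (B * aa B i)) - l (B * aa B i)"
      using l_mono by simp
    also have "\<dots> = l ((1 - \<delta>) * (B * aa B i)) - l ((1 - \<delta>) * (B * aa B i) + \<delta> * (B * aa B i))"
      by (simp add: algebra_simps)
    also have "\<dots> \<le> l (B * \<gamma> / 2) - l (B * \<gamma> / 2 + \<delta> * (B * aa B i))"
    proof (rule shift_le[OF cvx])
      show "0 \<le> \<delta> * (B * aa B i)" using d0 B0 ai g0 by simp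
      have "\<delta> * (B * \<gamma>) \<le> (1/2) * (B * \<gamma>)" using d1 B0 g0 by (intro mult_right_mono) auto
      then have "B * \<gamma> / 2 \<le> (1 - \<delta>) * (B * \<gamma>)" by (simp add: algebra_simps)
      also have "\<dots> \<le> (1 - \<delta>) * (B * aa B i)" using d1 B0 ai by (intro mult_left_mono) auto
      finally show "B * \<gamma> / 2 \<le> (1 - \<delta>) * (B * aa B i)" .
    qed
    also have "\<dots> \<le> \<Delta>"
      unfolding \<Delta>_def using aiM d0 B0 by (intro diff_left_mono l_mono) (simp add: algebra_simps)
    finally show ?thesis .
  qed
  have dj: "l (w' \<bullet> zz j) - l (B * aa B j) \<le> - G"
  proof -
    have "B * aa B j + B * \<delta> * \<gamma> / 2 \<le> w' \<bullet> zz j"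
    proof -
      have "\<delta> * (\<gamma> / 2) \<le> \<delta> * (u \<bullet> zz j - aa B j)" using ug j aj d0 by (intro mult_left_mono) auto
      then have "B * (\<delta> * (\<gamma> / 2)) \<le> B * (\<delta> * (u \<bullet> zz j - aa B j))"
        by (rule mult_left_mono) (use B0 in simp)
      then show ?thesis unfolding wz by (simp add: algebra_simps)
    qed
    then show ?thesis unfolding G_def using l_mono by fastforce
  qed
  have "(\<Sum>i<n. l (w' \<bullet> zz i) - l (B * aa B i))
      = (l (w' \<bullet> zz j) - l (B * aa B j)) + (\<Sum>i\<in>{..<n} - {j}. l (w' \<bullet> zz i) - l (B * aa B i))"
    using j by (simp add: sum.remove)
  also have "\<dots> \<le> - G + (\<Sum>i\<in>{..<n} - {j}. \<Delta>)"
    using dj di by (intro add_mono sum_mono) auto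
  also have "\<dots> \<le> - G + real n * \<Delta>"
    using j D0 by (simp add: mult_right_mono)
  finally show ?thesis using S unfolding G_def \<Delta>_def by simp
qed

end



context
  fixes p :: real and n :: nat and x :: "nat \<Rightarrow> real ^ 'd" and y :: "nat \<Rightarrow> real"
    and l :: "real \<Rightarrow> real" and wbar :: "real \<Rightarrow> real ^ 'd" and wreg :: "real ^ 'd"
  assumes p1: "p > 1" and npos: "n > 0"
    and decr: "antimono l" and cvx: "convex_on UNIV l" and no_min: "\<forall>t. \<exists>s. l s < l t"
    and path: "is_reg_path p (emp_loss l n x y) wbar"
    and dir: "((\<lambda>B. (1 / B) *\<^sub>R wbar B) \<longlongrightarrow> wreg) at_top"
begin

lemmas ctx1 = p1 npos decr cvx no_min path dir

lemma T_div_0: "((\<lambda>B::real. T / B) \<longlongrightarrow> 0) at_top"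
  by (intro tendsto_divide_0[OF tendsto_const] filterlim_at_top_imp_at_infinity filterlim_ident)

lemma L0: "emp_loss l n x y 0 = l 0"
  using npos by (simp add: emp_loss_def)

lemma case_lin:
  assumes u1: "lp_norm p u \<le> 1" and g0: "\<gamma> > 0" and ug: "\<forall>i<n. \<gamma> \<le> u \<bullet> zz x y i"
    and c0: "c > 0" and lin: "\<forall>t\<ge>t0. c * t \<le> l t - l (2 * t)" and a0: "\<alpha> > 0"
  shows "\<exists>r. \<forall>w. lp_norm p w > r \<longrightarrow>
           emp_loss l n x y (((1 + \<alpha>) * lp_norm p w) *\<^sub>R wreg) \<le> emp_loss l n x y w"
proof -
  let ?L = "emp_loss l n x y"
  have lm: "s \<le> t \<Longrightarrow> l t \<le> l s" for s t using decr by (simp add: antimono_def)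
  have opt: "B > 0 \<Longrightarrow> lp_norm p w \<le> B \<Longrightarrow> ?L (wbar B) \<le> ?L w" for B w
    using opt[OF ctx1] .
  have nw: "B > 0 \<Longrightarrow> lp_norm p (wbar B) \<le> B" for B using norm_wbar[OF ctx1] .
  have Lcvx: "convex_on UNIV ?L" by (rule emp_loss_convex[OF cvx])
  define \<kappa> where "\<kappa> B = (?L (wbar B) - l 0) / B" for B
  have lamk: "B > 0 \<Longrightarrow> ?L (wbar B) = l 0 + B * \<kappa> B" for B by (simp add: \<kappa>_def)
  have k0: "B > 0 \<Longrightarrow> \<kappa> B \<le> 0" for B
  proof -
    assume B: "B > 0"
    have "lp_norm p (0::real^'d) = 0" by (rule lp_norm_zero) (use p1 in simp)
    then have "lp_norm p (0::real^'d) \<le> B" using B by simp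
    then have "?L (wbar B) \<le> ?L 0" using opt[of B 0] B by blast
    then have "?L (wbar B) \<le> l 0" using L0 by simp
    then show "\<kappa> B \<le> 0" using B by (simp add: \<kappa>_def divide_nonpos_pos)
  qed
  have kmono: "\<kappa> B1 \<le> \<kappa> B2" if B: "0 < B1" "B1 \<le> B2" for B1 B2
  proof -
    define \<theta> where "\<theta> = B1 / B2"
    have th: "0 < \<theta>" "\<theta> \<le> 1" using B by (auto simp: \<theta>_def)
    have "lp_norm p (\<theta> *\<^sub>R wbar B2) = \<theta> * lp_norm p (wbar B2)"
      using p1 th by (intro lp_norm_scale) auto
    also have "\<dots> \<le> \<theta> * B2" using nw[of B2] B th by (intro mult_left_mono) auto
    also have "\<dots> = B1" using B by (simp add: \<theta>_def)
    finally have "?L (wbar B1) \<le> ?L (\<theta> *\<^sub>R wbar B2)" using opt B by blast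
    also have "\<theta> *\<^sub>R wbar B2 = (1 - (1 - \<theta>)) *\<^sub>R wbar B2 + (1 - \<theta>) *\<^sub>R 0" by simp
    also have "?L \<dots> \<le> (1 - (1 - \<theta>)) * ?L (wbar B2) + (1 - \<theta>) * ?L 0"
      using th by (intro convex_onD[OF Lcvx]) auto
    finally have "?L (wbar B1) - l 0 \<le> \<theta> * (?L (wbar B2) - l 0)"
      by (simp add: L0 algebra_simps)
    then have "(?L (wbar B1) - l 0) / B1 \<le> \<theta> * (?L (wbar B2) - l 0) / B1"
      using B by (simp add: divide_right_mono)
    also have "\<theta> * (?L (wbar B2) - l 0) / B1 = (?L (wbar B2) - l 0) / B2"
      using B by (simp add: \<theta>_def)
    finally show ?thesis by (simp add: \<kappa>_def)
  qed
  define t1 where "t1 = max t0 0"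
  have ls: "l s \<le> l 0 - c * s / 2" if "s \<ge> 2 * t1" for s
  proof -
    have "s / 2 \<ge> t0" using that by (simp add: t1_def)
    then have "c * (s / 2) \<le> l (s / 2) - l (2 * (s / 2))" using lin by blast
    moreover have "l (s / 2) \<le> l 0" using that by (intro lm) (auto simp: t1_def)
    ultimately show ?thesis by simp
  qed
  define B0 where "B0 = 2 * t1 / \<gamma> + 1"
  have "0 \<le> 2 * t1 / \<gamma>" using g0 by (simp add: t1_def)
  then have B0p: "B0 > 0" by (simp add: B0_def)
  have kneg: "\<kappa> B \<le> - (c * \<gamma> / 2)" if B: "B \<ge> B0" for B
  proof -
    have Bp: "B > 0" using B B0p by simp
    have "lp_norm p (B *\<^sub>R u) \<le> B"
      using lp_norm_scale[of p B u] p1 Bp u1 by (simp add: mult_left_le)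
    then have "?L (wbar B) \<le> ?L (B *\<^sub>R u)" using opt Bp by blast
    also have "\<dots> = (1 / real n) * (\<Sum>i<n. l (B * (u \<bullet> zz x y i)))"
      by (simp add: L_z[OF ctx1])
    also have "\<dots> \<le> (1 / real n) * (\<Sum>i<n. l (B * \<gamma>))"
      using ug Bp by (intro mult_left_mono sum_mono lm) auto
    also have "\<dots> = l (B * \<gamma>)" using npos by simp
    also have "\<dots> \<le> l 0 - c * (B * \<gamma>) / 2"
    proof (rule ls)
      have "2 * t1 = (2 * t1 / \<gamma>) * \<gamma>" using g0 by simp
      also have "\<dots> \<le> B * \<gamma>" using B g0 by (intro mult_right_mono) (auto simp: B0_def)
      finally show "2 * t1 \<le> B * \<gamma>" .
    qed
    finally have "?L (wbar B) - l 0 \<le> - (c * \<gamma> / 2) * B" by (simp add: algebra_simps)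
    then show ?thesis using Bp by (simp add: \<kappa>_def divide_simps)
  qed
  define K where "K = Sup (\<kappa> ` {0<..})"
  have bdd: "bdd_above (\<kappa> ` {0<..})" using k0 by (intro bdd_aboveI[of _ 0]) auto
  have Kub: "B > 0 \<Longrightarrow> \<kappa> B \<le> K" for B unfolding K_def using bdd by (intro cSup_upper) auto
  have Kneg: "K \<le> - (c * \<gamma> / 2)" unfolding K_def
  proof (rule cSup_least)
    show "\<kappa> ` {0<..} \<noteq> {}" by auto
  next
    fix k assume "k \<in> \<kappa> ` {0<..}"
    then obtain B where B: "B > 0" "k = \<kappa> B" by auto
    have "\<kappa> B \<le> \<kappa> (max B B0)" using B by (intro kmono) auto
    also have "\<dots> \<le> - (c * \<gamma> / 2)" by (intro kneg) auto
    finally show "k \<le> - (c * \<gamma> / 2)" using B by simp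
  qed
  have "c * \<gamma> > 0" using c0 g0 by simp
  then have Kn: "K < 0" using Kneg by linarith
  have "(1 + \<alpha>) * K < K" using Kn a0 by (simp add: mult_neg_pos)
  then obtain B1 where B1: "B1 > 0" "(1 + \<alpha>) * K < \<kappa> B1"
    using less_cSup_iff[OF _ bdd, of "(1 + \<alpha>) * K"] unfolding K_def[symmetric] by auto
  have upper: "?L (T *\<^sub>R wreg) \<le> l 0 + T * K" if T: "T > 0" for T
  proof -
    define P where "P B' = (1 / (1 - T / B')) *\<^sub>R (T *\<^sub>R (wreg - (1 / B') *\<^sub>R wbar B'))" for B'
    have ev: "\<forall>\<^sub>F B' in at_top. ?L (T *\<^sub>R wreg) \<le> T / B' * l 0 + T * K + (1 - T / B') * ?L (P B')"
      using eventually_gt_at_top[of T]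
    proof eventually_elim
      case (elim B')
      have Bp: "B' > 0" using elim T by simp
      have th: "0 < T / B'" "T / B' < 1" using elim T by auto
      have eq: "T *\<^sub>R wreg = (1 - (1 - T / B')) *\<^sub>R wbar B' + (1 - T / B') *\<^sub>R P B'"
      proof -
        have ne: "1 - T / B' \<noteq> 0" using th(2) by linarith
        have "(1 - T / B') *\<^sub>R P B' = T *\<^sub>R (wreg - (1 / B') *\<^sub>R wbar B')"
          unfolding P_def using ne by (simp only: scaleR_scaleR) simp
        also have "\<dots> = T *\<^sub>R wreg - (T / B') *\<^sub>R wbar B'"
          by (simp add: scaleR_diff_right)
        finally show ?thesis by simp
      qed
      have "?L (T *\<^sub>R wreg) \<le> (1 - (1 - T / B')) * ?L (wbar B') + (1 - T / B') * ?L (P B')"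
        unfolding eq using th by (intro convex_onD[OF Lcvx]) auto
      also have "(1 - (1 - T / B')) * ?L (wbar B') = T / B' * l 0 + T * \<kappa> B'"
        using Bp by (simp add: lamk[OF Bp] algebra_simps)
      also have "T * \<kappa> B' \<le> T * K" using Kub[OF Bp] T by simp
      finally show ?case by simp
    qed
    have Pt: "(P \<longlongrightarrow> 0) at_top"
    proof -
      have "((\<lambda>B'. (1 / (1 - T / B')) *\<^sub>R (T *\<^sub>R (wreg - (1 / B') *\<^sub>R wbar B')))
             \<longlongrightarrow> (1 / (1 - 0)) *\<^sub>R (T *\<^sub>R (wreg - wreg))) at_top"
        by (intro tendsto_intros T_div_0 dir) auto
      then show ?thesis by (simp add: P_def[abs_def])
    qed
    have cont: "isCont ?L 0"
      using emp_loss_cont[OF convex_on_continuous[OF open_UNIV cvx], of n x y]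
      by (simp add: continuous_on_eq_continuous_at)
    have lim: "((\<lambda>B'. T / B' * l 0 + T * K + (1 - T / B') * ?L (P B'))
               \<longlongrightarrow> 0 * l 0 + T * K + (1 - 0) * ?L 0) at_top"
      by (intro tendsto_intros T_div_0 isCont_tendsto_compose[OF cont Pt])
    show ?thesis using tendsto_lowerbound[OF lim ev] by (simp add: L0)
  qed
  show ?thesis
  proof (intro exI[of _ B1] allI impI)
    fix w :: "real ^ 'd" assume wB: "lp_norm p w > B1"
    define B where "B = lp_norm p w"
    have Bp: "B > 0" using wB B1 by (simp add: B_def)
    have "?L (((1 + \<alpha>) * lp_norm p w) *\<^sub>R wreg) \<le> l 0 + ((1 + \<alpha>) * B) * K"
      using upper[of "(1 + \<alpha>) * B"] Bp a0 by (simp add: B_def)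
    also have "\<dots> = l 0 + B * ((1 + \<alpha>) * K)" by simp
    also have "\<dots> \<le> l 0 + B * \<kappa> B"
    proof -
      have "(1 + \<alpha>) * K \<le> \<kappa> B" using B1 kmono[of B1 B] wB by (simp add: B_def)
      then show ?thesis using Bp by (simp add: mult_left_mono)
    qed
    also have "\<dots> = ?L (wbar B)" using lamk[OF Bp] by simp
    also have "\<dots> \<le> ?L w" using opt[OF Bp] by (simp add: B_def)
    finally show "?L (((1 + \<alpha>) * lp_norm p w) *\<^sub>R wreg) \<le> ?L w" .
  qed
qed

end



context
  fixes p :: real and n :: nat and x :: "nat \<Rightarrow> real ^ 'd" and y :: "nat \<Rightarrow> real"
    and l :: "real \<Rightarrow> real" and wbar :: "real \<Rightarrow> real ^ 'd" and wreg :: "real ^ 'd"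
  assumes p1: "p > 1" and npos: "n > 0"
    and decr: "antimono l" and cvx: "convex_on UNIV l" and no_min: "\<forall>t. \<exists>s. l s < l t"
    and path: "is_reg_path p (emp_loss l n x y) wbar"
    and dir: "((\<lambda>B. (1 / B) *\<^sub>R wbar B) \<longlongrightarrow> wreg) at_top"
begin

lemmas ctx2 = p1 npos decr cvx no_min path dir

lemma lm: "s \<le> t \<Longrightarrow> l t \<le> l s" using decr by (simp add: antimono_def)

lemma ls: "s < t \<Longrightarrow> l t < l s" using strict_decr[OF cvx decr no_min] by blast

lemma nonneg_margin:
  assumes u1: "lp_norm p u \<le> 1" and g0: "\<gamma> > 0" and ug: "\<forall>i<n. \<gamma> \<le> u \<bullet> zz x y i"
    and nlin: "\<not> (\<exists>c>0. \<exists>t0. \<forall>t\<ge>t0. c * t \<le> l t - l (2 * t))"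
    and j: "j < n"
  shows "mm x y wreg j \<ge> 0"
proof (rule ccontr)
  assume "\<not> mm x y wreg j \<ge> 0"
  then have mj: "mm x y wreg j < 0" by simp
  define \<mu> where "\<mu> = - mm x y wreg j / 2"
  have mu0: "\<mu> > 0" using mj by (simp add: \<mu>_def)
  obtain M where M0: "M > 0" and evM: "\<forall>\<^sub>F B in at_top. \<forall>i<n. aa x y wbar B i \<le> M"
    using M_bound[OF ctx2] by blast
  have eva: "\<forall>\<^sub>F B in at_top. aa x y wbar B j < - \<mu>"
  proof -
    have "mm x y wreg j < - \<mu>" using mj by (simp add: \<mu>_def)
    then show ?thesis using order_tendstoD(2)[OF a_tendsto[OF ctx2, of j]] by blast
  qed
  define \<delta> where "\<delta> = min (1/2) (\<mu> / \<gamma>)"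
  have d0: "\<delta> > 0" "\<delta> \<le> 1/2" "\<delta> * \<gamma> \<le> \<mu>"
    using mu0 g0 by (auto simp: \<delta>_def min_def field_simps)
  define \<sigma> where "\<sigma> = l 0 - l 1"
  have s0: "\<sigma> > 0" using ls[of 0 1] by (simp add: \<sigma>_def)
  define c where "c = \<sigma> * \<gamma> / (2 * real n * M)"
  have c0: "c > 0" using s0 g0 M0 npos by (simp add: c_def)
  obtain B0 where B0: "\<And>B. B \<ge> B0 \<Longrightarrow> B > 0 \<and> (\<forall>i<n. aa x y wbar B i \<le> M) \<and> aa x y wbar B j < - \<mu>"
    using eventually_conj[OF eventually_gt_at_top[of 0] eventually_conj[OF evM eva]]
    unfolding eventually_at_top_linorder by blast
  have "\<forall>t\<ge>B0 * \<gamma> / 4. c * t \<le> l t - l (2 * t)"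
  proof (intro allI impI)
    fix t assume t: "t \<ge> B0 * \<gamma> / 4"
    define B where "B = 4 * t / \<gamma>"
    have "B \<ge> B0" using t g0 by (simp add: B_def field_simps)
    note BB = B0[OF this]
    have Bp: "B > 0" using BB by blast
    have tB: "t = B * \<gamma> / 4" using g0 by (simp add: B_def)
    have "B * \<gamma> > 0" using Bp g0 by simp
    then have tp: "t > 0" using tB by simp
    let ?a = "aa x y wbar B j"
    have P: "l (B * ?a) - l (B * ?a + B * \<delta> * \<gamma> / 2)
         \<le> real n * (l (B * \<gamma> / 2) - l (B * \<gamma> / 2 + B * \<delta> * M))"
      using BB g0 mu0 M0 d0 j by (intro pert[OF ctx2 u1 g0 ug]) auto
    have h0: "B * \<delta> * \<gamma> / 2 > 0" using Bp d0 g0 by simp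
    have "B * ?a + B * \<delta> * \<gamma> / 2 \<le> 0"
    proof -
      have "B * ?a \<le> B * (- \<mu>)" using BB Bp by (intro mult_left_mono) auto
      moreover have "B * (\<delta> * \<gamma>) \<le> B * \<mu>" using d0 Bp by (intro mult_left_mono) auto
      moreover have "B * \<mu> > 0" using Bp mu0 by simp
      moreover have "B * \<delta> * \<gamma> / 2 = (B * (\<delta> * \<gamma>)) / 2" by simp
      ultimately show ?thesis by linarith
    qed
    then have "(l 0 - l 1) * (B * ?a + B * \<delta> * \<gamma> / 2 - B * ?a)
        \<le> (l (B * ?a) - l (B * ?a + B * \<delta> * \<gamma> / 2)) * (1 - 0)"
      using h0 by (intro chord_le[OF cvx]) auto
    then have L1: "\<sigma> * (B * \<delta> * \<gamma> / 2) \<le> real n * (l (2 * t) - l (2 * t + B * \<delta> * M))"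
      using P by (simp add: \<sigma>_def tB algebra_simps)
    have L2: "(l (2 * t) - l (2 * t + B * \<delta> * M)) * (2 * t - t) \<le> (l t - l (2 * t)) * (2 * t + B * \<delta> * M - 2 * t)"
      using tp Bp d0 M0 by (intro chord_le[OF cvx]) auto
    have "\<sigma> * (B * \<delta> * \<gamma> / 2) * t \<le> real n * (l (2 * t) - l (2 * t + B * \<delta> * M)) * t"
      using L1 tp by (intro mult_right_mono) auto
    also have "\<dots> \<le> real n * ((l t - l (2 * t)) * (B * \<delta> * M))"
      using L2 by (simp add: mult.assoc mult_left_mono)
    finally have "(B * \<delta>) * (\<sigma> * \<gamma> / 2 * t) \<le> (B * \<delta>) * (real n * M * (l t - l (2 * t)))"
      by (simp add: algebra_simps)
    then have "\<sigma> * \<gamma> / 2 * t \<le> real n * M * (l t - l (2 * t))"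
      by (rule mult_left_le_imp_le) (use Bp d0 in simp)
    then show "c * t \<le> l t - l (2 * t)"
      using npos M0 by (simp add: c_def field_simps)
  qed
  then show False using nlin c0 by blast
qed

lemma case_pos:
  assumes pos: "\<forall>i<n. mm x y wreg i > 0" and a0: "\<alpha> > 0"
  shows "\<exists>r. \<forall>w. lp_norm p w > r \<longrightarrow>
           emp_loss l n x y (((1 + \<alpha>) * lp_norm p w) *\<^sub>R wreg) \<le> emp_loss l n x y w"
proof -
  have "\<forall>\<^sub>F B in at_top. \<forall>i\<in>{..<n}. aa x y wbar B i < (1 + \<alpha>) * mm x y wreg i"
    using pos a0 by (intro eventually_ball_finite ballI order_tendstoD(2)[OF a_tendsto[OF ctx2]])
      (auto simp: mult_pos_pos)
  then obtain B1 where B1: "\<And>B. B \<ge> B1 \<Longrightarrow> \<forall>i<n. aa x y wbar B i < (1 + \<alpha>) * mm x y wreg i"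
    unfolding eventually_at_top_linorder by auto
  show ?thesis
  proof (intro exI[of _ "max B1 0"] allI impI)
    fix w :: "real ^ 'd" assume w: "lp_norm p w > max B1 0"
    define B where "B = lp_norm p w"
    have Bp: "B > 0" and BB: "B \<ge> B1" using w by (auto simp: B_def)
    have "emp_loss l n x y (((1 + \<alpha>) * B) *\<^sub>R wreg) = (1 / real n) * (\<Sum>i<n. l ((1 + \<alpha>) * B * mm x y wreg i))"
      by (rule L_wreg[OF ctx2])
    also have "\<dots> \<le> (1 / real n) * (\<Sum>i<n. l (B * aa x y wbar B i))"
    proof (intro mult_left_mono sum_mono lm)
      fix i assume "i \<in> {..<n}"
      then have "aa x y wbar B i \<le> (1 + \<alpha>) * mm x y wreg i" using B1[OF BB] by auto
      then show "B * aa x y wbar B i \<le> (1 + \<alpha>) * B * mm x y wreg i"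
        using Bp by (simp add: mult_left_mono mult.assoc mult.left_commute[of B])
    qed simp
    also have "\<dots> = emp_loss l n x y (wbar B)" using L_wbar[OF ctx2 Bp] by simp
    also have "\<dots> \<le> emp_loss l n x y w" using opt[OF ctx2 Bp] by (simp add: B_def)
    finally show "emp_loss l n x y (((1 + \<alpha>) * lp_norm p w) *\<^sub>R wreg) \<le> emp_loss l n x y w"
      by (simp add: B_def)
  qed
qed

end



context
  fixes p :: real and n :: nat and x :: "nat \<Rightarrow> real ^ 'd" and y :: "nat \<Rightarrow> real"
    and l :: "real \<Rightarrow> real" and wbar :: "real \<Rightarrow> real ^ 'd" and wreg :: "real ^ 'd"
  assumes p1: "p > 1" and npos: "n > 0"
    and decr: "antimono l" and cvx: "convex_on UNIV l" and no_min: "\<forall>t. \<exists>s. l s < l t"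
    and path: "is_reg_path p (emp_loss l n x y) wbar"
    and dir: "((\<lambda>B. (1 / B) *\<^sub>R wbar B) \<longlongrightarrow> wreg) at_top"
begin

lemmas ctx3 = p1 npos decr cvx no_min path dir

lemma exists_pos:
  assumes u1: "lp_norm p u \<le> 1" and g0: "\<gamma> > 0" and ug: "\<forall>i<n. \<gamma> \<le> u \<bullet> zz x y i"
  shows "\<exists>i0<n. mm x y wreg i0 > 0"
proof (rule ccontr)
  assume "\<not> (\<exists>i0<n. mm x y wreg i0 > 0)"
  then have m0: "\<forall>i<n. mm x y wreg i \<le> 0" by auto
  have "\<forall>\<^sub>F B in at_top. \<forall>i\<in>{..<n}. aa x y wbar B i < \<gamma> / 2"
    using m0 g0 by (intro eventually_ball_finite ballI order_tendstoD(2)[OF a_tendsto[OF ctx3]])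
      (auto simp: less_le_trans)
  then obtain N where N: "\<And>B. B \<ge> N \<Longrightarrow> \<forall>i\<in>{..<n}. aa x y wbar B i < \<gamma> / 2"
    unfolding eventually_at_top_linorder by blast
  define B where "B = max N 1"
  have B: "B > 0" "\<forall>i<n. aa x y wbar B i < \<gamma> / 2" using N[of B] by (auto simp: B_def)
  let ?a = "aa x y wbar B 0"
  have "l (B * ?a) - l (B * ?a + B * (1/2) * \<gamma> / 2)
         \<le> real n * (l (B * \<gamma> / 2) - l (B * \<gamma> / 2 + B * (1/2) * 0))"
    using B g0 npos by (intro pert[OF ctx3 u1 g0 ug]) force+
  moreover have "l (B * ?a + B * (1/2) * \<gamma> / 2) < l (B * ?a)"
    using B g0 by (intro ls[OF ctx3]) simp
  ultimately show False by simp
qed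

lemma DV:
  assumes u1: "lp_norm p u \<le> 1" and g0: "\<gamma> > 0" and ug: "\<forall>i<n. \<gamma> \<le> u \<bullet> zz x y i"
    and j: "j < n" and mj: "mm x y wreg j = 0" and M0: "M > 0"
    and evM: "\<forall>\<^sub>F B in at_top. \<forall>i<n. aa x y wbar B i \<le> M"
    and r1: "r > 1" and rho: "0 < \<rho>" "\<rho> \<le> 1"
  shows "\<exists>t0. \<forall>t\<ge>t0. l (\<rho> * t / r) - l (\<rho> * t) \<le> (2 * real n * M / \<gamma>) * \<rho> * (l (t / r) - l t)"
proof -
  define \<epsilon> where "\<epsilon> = \<rho> * \<gamma> / (4 * r)"
  have e0: "\<epsilon> > 0" using rho g0 r1 by (simp add: \<epsilon>_def)
  have eg: "\<epsilon> \<le> \<gamma> / 2"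
  proof -
    have "\<rho> * \<gamma> \<le> 1 * \<gamma>" using rho g0 by (intro mult_right_mono) auto
    also have "\<dots> \<le> 2 * r * \<gamma>" using r1 g0 by simp
    finally show ?thesis using r1 by (simp add: \<epsilon>_def field_simps)
  qed
  define \<delta> where "\<delta> = \<rho> * (1 - 1 / r) / 2"
  have r1': "0 < 1 - 1 / r" "1 - 1 / r < 1" using r1 by (auto simp: field_simps)
  have d0: "\<delta> > 0" "\<delta> \<le> 1/2"
  proof -
    show "\<delta> > 0" using rho r1' by (simp add: \<delta>_def)
    have "\<rho> * (1 - 1 / r) \<le> 1 * 1" using rho r1' by (intro mult_mono) auto
    then show "\<delta> \<le> 1/2" by (simp add: \<delta>_def)
  qed
  have eva: "\<forall>\<^sub>F B in at_top. aa x y wbar B j < \<epsilon>"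
    using order_tendstoD(2)[OF a_tendsto[OF ctx3, of j]] mj e0 by simp
  obtain B0 where B0: "\<And>B. B \<ge> B0 \<Longrightarrow> B > 0 \<and> (\<forall>i<n. aa x y wbar B i \<le> M) \<and> aa x y wbar B j < \<epsilon>"
    using eventually_conj[OF eventually_gt_at_top[of 0] eventually_conj[OF evM eva]]
    unfolding eventually_at_top_linorder by blast
  show ?thesis
  proof (intro exI[of _ "B0 * \<gamma> / 4"] allI impI)
    fix t assume t: "t \<ge> B0 * \<gamma> / 4"
    define B where "B = 4 * t / \<gamma>"
    have "B \<ge> B0" using t g0 by (simp add: B_def field_simps)
    note BB = B0[OF this]
    have Bp: "B > 0" using BB by blast
    have tB: "t = B * \<gamma> / 4" using g0 by (simp add: B_def)
    have "B * \<gamma> > 0" using Bp g0 by simp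
    then have tp: "t > 0" using tB by simp
    let ?a = "aa x y wbar B j"
    have P: "l (B * ?a) - l (B * ?a + B * \<delta> * \<gamma> / 2)
         \<le> real n * (l (B * \<gamma> / 2) - l (B * \<gamma> / 2 + B * \<delta> * M))"
      using BB g0 M0 d0 j eg by (intro pert[OF ctx3 u1 g0 ug]) auto
    have h0: "B * \<delta> * \<gamma> / 2 \<ge> 0" using Bp d0 g0 by simp
    have "B * ?a \<le> B * \<epsilon>" using BB Bp by (intro mult_left_mono) auto
    from shift_le[OF cvx h0 this]
    have S1: "l (B * \<epsilon>) - l (B * \<epsilon> + B * \<delta> * \<gamma> / 2) \<le> l (B * ?a) - l (B * ?a + B * \<delta> * \<gamma> / 2)" .
    have e1: "B * \<epsilon> = \<rho> * t / r" using g0 r1 by (simp add: tB \<epsilon>_def field_simps)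
    have e2: "B * \<epsilon> + B * \<delta> * \<gamma> / 2 = \<rho> * t" using g0 r1 by (simp add: tB \<epsilon>_def \<delta>_def field_simps)
    have e3: "B * \<gamma> / 2 = 2 * t" by (simp add: tB)
    define X where "X = l (2 * t) - l (2 * t + B * \<delta> * M)"
    have BdM: "B * \<delta> * M = (t - t / r) * (2 * \<rho> * M / \<gamma>)"
      using g0 r1 by (simp add: tB \<delta>_def field_simps)
    have trt: "t / r < t" using tp r1 by (simp add: divide_less_eq)
    have bdm0: "B * \<delta> * M > 0" using Bp d0 M0 by simp
    have "(l (2 * t) - l (2 * t + B * \<delta> * M)) * (t - t / r) \<le> (l (t / r) - l t) * (2 * t + B * \<delta> * M - 2 * t)"
      using trt tp bdm0 by (intro chord_le[OF cvx]) auto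
    then have "X * (t - t / r) \<le> (l (t / r) - l t) * (B * \<delta> * M)"
      by (simp add: X_def)
    then have "X * (t - t / r) \<le> (l (t / r) - l t) * ((t - t / r) * (2 * \<rho> * M / \<gamma>))"
      by (simp only: BdM)
    then have "X * (t - t / r) \<le> ((l (t / r) - l t) * (2 * \<rho> * M / \<gamma>)) * (t - t / r)"
      by (simp only: ac_simps)
    then have X: "X \<le> (l (t / r) - l t) * (2 * \<rho> * M / \<gamma>)"
      by (rule mult_right_le_imp_le) (use trt in simp)
    have "l (\<rho> * t / r) - l (\<rho> * t) \<le> real n * X"
    proof -
      have "l (\<rho> * t / r) - l (\<rho> * t) \<le> l (B * ?a) - l (B * ?a + B * \<delta> * \<gamma> / 2)"
        using S1 unfolding e2 unfolding e1 .
      moreover have "l (B * ?a) - l (B * ?a + B * \<delta> * \<gamma> / 2) \<le> real n * X"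
        using P unfolding e3 X_def .
      ultimately show ?thesis by linarith
    qed
    also have "\<dots> \<le> real n * ((l (t / r) - l t) * (2 * \<rho> * M / \<gamma>))"
      by (rule mult_left_mono[OF X]) simp
    also have "\<dots> = (2 * real n * M / \<gamma>) * \<rho> * (l (t / r) - l t)" by (simp add: field_simps)
    finally show "l (\<rho> * t / r) - l (\<rho> * t) \<le> (2 * real n * M / \<gamma>) * \<rho> * (l (t / r) - l t)" .
  qed
qed

end



context
  fixes p :: real and n :: nat and x :: "nat \<Rightarrow> real ^ 'd" and y :: "nat \<Rightarrow> real"
    and l :: "real \<Rightarrow> real" and wbar :: "real \<Rightarrow> real ^ 'd" and wreg :: "real ^ 'd"
  assumes p1: "p > 1" and npos: "n > 0"
    and decr: "antimono l" and cvx: "convex_on UNIV l" and no_min: "\<forall>t. \<exists>s. l s < l t"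
    and path: "is_reg_path p (emp_loss l n x y) wbar"
    and dir: "((\<lambda>B. (1 / B) *\<^sub>R wbar B) \<longlongrightarrow> wreg) at_top"
begin

lemmas ctx4 = p1 npos decr cvx no_min path dir

lemma case_zero:
  assumes u1: "lp_norm p u \<le> 1" and g0: "\<gamma> > 0" and ug: "\<forall>i<n. \<gamma> \<le> u \<bullet> zz x y i"
    and j: "j < n" and mj: "mm x y wreg j = 0" and nonneg: "\<forall>i<n. mm x y wreg i \<ge> 0"
    and a0: "\<alpha> > 0"
  shows "\<exists>r. \<forall>w. lp_norm p w > r \<longrightarrow>
           emp_loss l n x y (((1 + \<alpha>) * lp_norm p w) *\<^sub>R wreg) \<le> emp_loss l n x y w"
proof -
  note lm = lm[OF ctx4]
  note ls = ls[OF ctx4]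
  obtain i0 where i0: "i0 < n" "mm x y wreg i0 > 0" using exists_pos[OF ctx4 u1 g0 ug] by blast
  obtain M where M0: "M > 0" and evM: "\<forall>\<^sub>F B in at_top. \<forall>i<n. aa x y wbar B i \<le> M"
    using M_bound[OF ctx4] by blast
  define K where "K = 2 * real n * M / \<gamma>"
  have K0: "K > 0" using M0 g0 npos by (simp add: K_def)
  define r where "r = max 2 (4 * K)"
  have r1: "r > 1" and r2: "r \<ge> 2" and Kr: "K / r \<le> 1/4" using K0 by (auto simp: r_def field_simps)
  define W where "W s = l (s / r) - l s" for s
  have sr: "s / r \<le> s" if "s \<ge> 0" for s
    using divide_left_mono[of 1 r s] r1 that by simp
  have W0: "s \<ge> 0 \<Longrightarrow> W s \<ge> 0" for s
    unfolding W_def using sr by (intro diff_ge_0_iff_ge[THEN iffD2] lm) simp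
  have DVr: "\<exists>t0. \<forall>t\<ge>t0. W (\<rho> * t) \<le> K * \<rho> * W t" if "0 < \<rho>" "\<rho> \<le> 1" for \<rho>
    using DV[OF ctx4 u1 g0 ug j mj M0 evM r1 that] unfolding W_def K_def by simp
  obtain t1 where t1: "\<And>t. t \<ge> t1 \<Longrightarrow> W (t / r) \<le> W t / 4" and t1p: "t1 \<ge> 0"
  proof -
    obtain t0 where t0: "\<And>t. t \<ge> t0 \<Longrightarrow> W (1 / r * t) \<le> K * (1 / r) * W t"
      using DVr[of "1 / r"] r1 by auto
    have "W (t / r) \<le> W t / 4" if "t \<ge> max t0 0" for t
    proof -
      have "W (t / r) \<le> K * (1 / r) * W t" using t0[of t] that by simp
      also have "\<dots> \<le> (1/4) * W t" using Kr W0[of t] that by (intro mult_right_mono) auto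
      finally show ?thesis by simp
    qed
    then show ?thesis using that[of "max t0 0"] by simp
  qed
  define x0 where "x0 = max t1 1"
  have x0p: "x0 > 0" "x0 \<ge> 1" "x0 \<ge> t1" by (auto simp: x0_def)
  define C where "C = l 0 - l (x0 * r)"
  have C0: "C \<ge> 0" unfolding C_def using x0p r1 by (intro diff_ge_0_iff_ge[THEN iffD2] lm) simp
  have rpow: "r ^ k \<ge> 1" for k using r1 by simp
  have Hk: "\<forall>x. x0 \<le> x \<and> x \<le> x0 * r ^ Suc k \<longrightarrow> l 0 - l x \<le> 4/3 * W x + C" for k
  proof (induction k)
    case 0
    show ?case
    proof (intro allI impI)
      fix x assume x: "x0 \<le> x \<and> x \<le> x0 * r ^ Suc 0"
      have "l (x0 * r) \<le> l x" using x by (intro lm) simp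
      moreover have "W x \<ge> 0" using x x0p by (intro W0) simp
      ultimately show "l 0 - l x \<le> 4/3 * W x + C" by (simp add: C_def)
    qed
  next
    case (Suc k)
    show ?case
    proof (intro allI impI)
      fix x assume x: "x0 \<le> x \<and> x \<le> x0 * r ^ Suc (Suc k)"
      show "l 0 - l x \<le> 4/3 * W x + C"
      proof (cases "x \<le> x0 * r ^ Suc k")
        case True then show ?thesis using Suc x by blast
      next
        case False
        have "x0 * r \<le> x0 * r ^ Suc k" using x0p r1 rpow[of k] by simp
        then have "x0 * r \<le> x" using False by simp
        then have xr1: "x0 \<le> x / r" using r1 by (simp add: field_simps)
        have "x \<le> r * (x0 * r ^ Suc k)" using x by (simp add: algebra_simps)
        then have xr2: "x / r \<le> x0 * r ^ Suc k" using r1 by (simp add: field_simps)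
        have IH: "l 0 - l (x / r) \<le> 4/3 * W (x / r) + C" using Suc xr1 xr2 by blast
        have ct: "W (x / r) \<le> W x / 4" using t1[of x] x x0p by simp
        have "l 0 - l x = W x + (l 0 - l (x / r))" by (simp add: W_def)
        also have "\<dots> \<le> W x + (4/3 * (W x / 4) + C)" using IH ct by simp
        also have "\<dots> = 4/3 * W x + C" by simp
        finally show ?thesis .
      qed
    qed
  qed
  have Hb: "l 0 - l x \<le> 4/3 * W x + C" if x: "x \<ge> x0" for x
  proof -
    obtain k where "x / x0 < r ^ k" using real_arch_pow[OF r1] by blast
    then have "x \<le> x0 * r ^ k" using x0p by (simp add: field_simps)
    also have "\<dots> \<le> x0 * r ^ Suc k" using x0p r1 rpow[of k] by simp
    finally show ?thesis using Hk[of k] x by blast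
  qed
  have Wpos: "W x0 > 0" unfolding W_def using ls[of "x0 / r" x0] x0p r1 by (simp add: divide_less_eq)
  have Wgrow: "W (x0 * r ^ k) \<ge> 4 ^ k * W x0" for k
  proof (induction k)
    case (Suc k)
    have "x0 * r ^ Suc k \<ge> t1" using x0p rpow[of "Suc k"] by (smt (verit) mult_le_cancel_left1)
    then have "W (x0 * r ^ Suc k / r) \<le> W (x0 * r ^ Suc k) / 4" by (rule t1)
    moreover have "x0 * r ^ Suc k / r = x0 * r ^ k" using r1 by simp
    ultimately show ?case using Suc by simp
  qed simp
  have Winf: "\<exists>s0. \<forall>s\<ge>s0. Y \<le> W s" for Y
  proof -
    define Z where "Z = 4/3 * \<bar>Y\<bar> + C"
    obtain k where k: "Z / W x0 < 4 ^ k" using real_arch_pow[of 4 "Z / W x0"] by auto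
    then have kZ: "Z < 4 ^ k * W x0" using Wpos by (simp add: divide_less_eq)
    define s0 where "s0 = x0 * r ^ k"
    have s0x: "s0 \<ge> x0" using x0p rpow[of k] by (simp add: s0_def)
    show ?thesis
    proof (intro exI[of _ s0] allI impI)
      fix s assume s: "s \<ge> s0"
      have "W s0 \<le> l 0 - l s0" unfolding W_def using s0x x0p r1
        by (simp add: lm zero_le_divide_iff)
      also have "\<dots> \<le> l 0 - l s" using s lm by simp
      also have "\<dots> \<le> 4/3 * W s + C" using Hb[of s] s s0x by simp
      finally have "4 ^ k * W x0 \<le> 4/3 * W s + C" using Wgrow[of k] by (simp add: s0_def)
      then have "4/3 * \<bar>Y\<bar> \<le> 4/3 * W s" using kZ by (simp add: Z_def)
      then show "Y \<le> W s" by simp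
    qed
  qed
  define m0 where "m0 = mm x y wreg i0"
  have m0p: "m0 > 0" using i0 by (simp add: m0_def)
  define c1 where "c1 = (1 + \<alpha> / 2) * m0"
  define c2 where "c2 = (1 + \<alpha>) * m0"
  have am: "\<alpha> * m0 > 0" using a0 m0p by simp
  have c12: "0 < c1" "c1 < c2" "m0 < c1" using m0p am by (auto simp: c1_def c2_def algebra_simps)
  define \<beta> where "\<beta> = (c2 - c1) / (c2 * (r - 1))"
  have b0: "\<beta> > 0" using c12 r1 by (simp add: \<beta>_def)
  define \<rho> where "\<rho> = min 1 (3 * \<beta> / (8 * real n * K))"
  have rho: "0 < \<rho>" "\<rho> \<le> 1" "\<rho> \<le> 3 * \<beta> / (8 * real n * K)"
    using b0 K0 npos by (auto simp: \<rho>_def)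
  define \<eta> where "\<eta> = \<rho> * r * c2"
  have eta0: "\<eta> > 0" using rho r1 c12 by (simp add: \<eta>_def)
  obtain t\<rho> where t\<rho>: "\<And>t. t \<ge> t\<rho> \<Longrightarrow> W (\<rho> * t) \<le> K * \<rho> * W t" using DVr[OF rho(1,2)] by blast
  obtain s0 where s0: "\<And>s. s \<ge> s0 \<Longrightarrow> 2 * real n * C / \<beta> \<le> W s" using Winf by blast
  define S where "S = max t\<rho> s0"
  have ev1: "\<forall>\<^sub>F B in at_top. \<forall>i\<in>{..<n}. (mm x y wreg i = 0 \<longrightarrow> aa x y wbar B i < \<eta>)
      \<and> (0 < mm x y wreg i \<longrightarrow> aa x y wbar B i < (1 + \<alpha>) * mm x y wreg i)"
  proof (intro eventually_ball_finite ballI)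
    fix i assume "i \<in> {..<n}"
    show "\<forall>\<^sub>F B in at_top. (mm x y wreg i = 0 \<longrightarrow> aa x y wbar B i < \<eta>)
      \<and> (0 < mm x y wreg i \<longrightarrow> aa x y wbar B i < (1 + \<alpha>) * mm x y wreg i)"
    proof (cases "mm x y wreg i = 0")
      case True
      then show ?thesis using order_tendstoD(2)[OF a_tendsto[OF ctx4, of i], of \<eta>] eta0 by simp
    next
      case False
      show ?thesis
      proof (cases "0 < mm x y wreg i")
        case True
        then have "mm x y wreg i < (1 + \<alpha>) * mm x y wreg i" using a0 by simp
        then show ?thesis using order_tendstoD(2)[OF a_tendsto[OF ctx4, of i]] False by simp
      qed (use False in simp)
    qed
  qed simp
  have ev2: "\<forall>\<^sub>F B in at_top. aa x y wbar B i0 < c1"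
    using order_tendstoD(2)[OF a_tendsto[OF ctx4, of i0], of c1] c12 by (simp add: m0_def)
  have ev3: "\<forall>\<^sub>F B in at_top. B \<ge> max (max (S / (r * c2)) (x0 / \<eta>)) 1"
    by (rule eventually_ge_at_top)
  obtain B1 where B1: "\<And>B. B \<ge> B1 \<Longrightarrow> (\<forall>i\<in>{..<n}. (mm x y wreg i = 0 \<longrightarrow> aa x y wbar B i < \<eta>)
      \<and> (0 < mm x y wreg i \<longrightarrow> aa x y wbar B i < (1 + \<alpha>) * mm x y wreg i))
      \<and> aa x y wbar B i0 < c1 \<and> B \<ge> max (max (S / (r * c2)) (x0 / \<eta>)) 1"
    using eventually_conj[OF ev1 eventually_conj[OF ev2 ev3]]
    unfolding eventually_at_top_linorder by blast
  show ?thesis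
  proof (intro exI[of _ B1] allI impI)
    fix w :: "real ^ 'd" assume w: "lp_norm p w > B1"
    define B where "B = lp_norm p w"
    note BB = B1[of B]
    have BB: "(\<forall>i\<in>{..<n}. (mm x y wreg i = 0 \<longrightarrow> aa x y wbar B i < \<eta>)
      \<and> (0 < mm x y wreg i \<longrightarrow> aa x y wbar B i < (1 + \<alpha>) * mm x y wreg i))
      \<and> aa x y wbar B i0 < c1 \<and> B \<ge> max (max (S / (r * c2)) (x0 / \<eta>)) 1"
      using BB w by (simp add: B_def)
    have Bp: "B > 0" using BB by simp
    define T where "T = (1 + \<alpha>) * B"
    define H\<eta> where "H\<eta> = l 0 - l (B * \<eta>)"
    define Gn where "Gn = l (c1 * B) - l (c2 * B)"
    have Hp: "H\<eta> \<ge> 0" unfolding H\<eta>_def using Bp eta0 by (intro diff_ge_0_iff_ge[THEN iffD2] lm) simp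
    have termb: "l (T * mm x y wreg i) \<le> l (B * aa x y wbar B i) + ((if i = i0 then - Gn else 0) + H\<eta>)"
      if i: "i < n" for i
    proof (cases "i = i0")
      case True
      have "B * aa x y wbar B i0 \<le> c1 * B" using BB Bp by (simp add: mult.commute)
      then have "l (c1 * B) \<le> l (B * aa x y wbar B i0)" by (rule lm)
      moreover have "T * mm x y wreg i0 = c2 * B" by (simp add: T_def c2_def m0_def)
      ultimately show ?thesis using True Hp by (simp add: Gn_def)
    next
      case False
      show ?thesis
      proof (cases "mm x y wreg i = 0")
        case True
        have "B * aa x y wbar B i \<le> B * \<eta>" using BB Bp True i by (intro mult_left_mono) auto
        then have "l (B * \<eta>) \<le> l (B * aa x y wbar B i)" by (rule lm)
        then show ?thesis using True False by (simp add: H\<eta>_def)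
      next
        case nz: False
        then have "0 < mm x y wreg i" using nonneg i by (simp add: less_le)
        then have "aa x y wbar B i \<le> (1 + \<alpha>) * mm x y wreg i" using BB i by auto
        then have "B * aa x y wbar B i \<le> T * mm x y wreg i" using Bp
          by (simp add: T_def mult_left_mono mult.assoc)
        then have "l (T * mm x y wreg i) \<le> l (B * aa x y wbar B i)" by (rule lm)
        then show ?thesis using False Hp by simp
      qed
    qed
    have "(\<Sum>i<n. l (T * mm x y wreg i))
        \<le> (\<Sum>i<n. l (B * aa x y wbar B i) + ((if i = i0 then - Gn else 0) + H\<eta>))"
      using termb by (intro sum_mono) auto
    also have "\<dots> = (\<Sum>i<n. l (B * aa x y wbar B i)) + (- Gn + real n * H\<eta>)"
      using i0 by (simp add: sum.distrib)
    finally have sumineq: "(\<Sum>i<n. l (T * mm x y wreg i)) \<le> (\<Sum>i<n. l (B * aa x y wbar B i)) + (- Gn + real n * H\<eta>)" .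
    define s where "s = r * c2 * B"
    have sS: "s \<ge> S"
    proof -
      have "S / (r * c2) \<le> B" using BB by simp
      then show ?thesis using r1 c12 by (simp add: s_def divide_le_eq mult.commute)
    qed
    have Beta: "B * \<eta> = \<rho> * s" by (simp add: s_def \<eta>_def)
    have Bx0: "B * \<eta> \<ge> x0"
    proof -
      have "x0 / \<eta> \<le> B" using BB by simp
      then show ?thesis using eta0 by (simp add: divide_le_eq mult.commute)
    qed
    have sp: "s \<ge> 0" using r1 c12 Bp by (simp add: s_def)
    have Ws0: "W s \<ge> 0" using W0 sp by simp
    have h1: "H\<eta> \<le> 4/3 * W (\<rho> * s) + C" using Hb[OF Bx0] by (simp add: H\<eta>_def Beta)
    have h2: "W (\<rho> * s) \<le> K * \<rho> * W s" using t\<rho>[of s] sS by (simp add: S_def)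
    have h3: "real n * (4/3 * (K * \<rho>)) \<le> \<beta> / 2"
    proof -
      have "real n * K * \<rho> \<le> real n * K * (3 * \<beta> / (8 * real n * K))"
        using rho K0 npos by (intro mult_left_mono) auto
      also have "\<dots> = 3 * \<beta> / 8" using K0 npos by (simp add: field_simps)
      finally show ?thesis by (simp add: algebra_simps)
    qed
    have h4: "real n * C \<le> \<beta> / 2 * W s"
    proof -
      have "2 * real n * C / \<beta> \<le> W s" using s0[of s] sS by (simp add: S_def)
      then show ?thesis using b0 by (simp add: field_simps)
    qed
    have nH: "real n * H\<eta> \<le> \<beta> * W s"
    proof -
      have "real n * H\<eta> \<le> real n * (4/3 * (K * \<rho> * W s) + C)"
        using h1 h2 npos by (intro mult_left_mono) auto
      also have "\<dots> = (real n * (4/3 * (K * \<rho>))) * W s + real n * C" by (simp add: algebra_simps)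
      also have "\<dots> \<le> \<beta> / 2 * W s + \<beta> / 2 * W s"
        using h3 h4 Ws0 by (intro add_mono mult_right_mono) auto
      finally show ?thesis by simp
    qed
    have GW: "\<beta> * W s \<le> Gn"
    proof -
      have cb: "c1 * B < c2 * B" "c2 * B < s" using c12 Bp r1 by (auto simp: s_def)
      have "(l (c2 * B) - l s) * (c2 * B - c1 * B) \<le> (l (c1 * B) - l (c2 * B)) * (s - c2 * B)"
        using cb by (intro chord_le[OF cvx]) auto
      moreover have "s / r = c2 * B" using r1 by (simp add: s_def)
      ultimately have "W s * ((c2 - c1) * B) \<le> Gn * ((r - 1) * c2 * B)"
        by (simp add: W_def Gn_def s_def algebra_simps)
      then have "W s * (c2 - c1) \<le> Gn * ((r - 1) * c2)"
        using Bp by (simp add: mult.assoc[symmetric] mult_le_cancel_right)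
      then show ?thesis using r1 c12 by (simp add: \<beta>_def field_simps)
    qed
    have "(\<Sum>i<n. l (T * mm x y wreg i)) \<le> (\<Sum>i<n. l (B * aa x y wbar B i))"
      using sumineq nH GW by linarith
    then have "emp_loss l n x y (T *\<^sub>R wreg) \<le> emp_loss l n x y (wbar B)"
      using npos by (simp add: L_wreg[OF ctx4] L_wbar[OF ctx4 Bp] divide_right_mono)
    also have "\<dots> \<le> emp_loss l n x y w" using opt[OF ctx4 Bp] by (simp add: B_def)
    finally show "emp_loss l n x y (((1 + \<alpha>) * lp_norm p w) *\<^sub>R wreg) \<le> emp_loss l n x y w"
      by (simp add: T_def B_def)
  qed
qed

end



theorem lemma4:
  fixes p q C :: real and n :: nat
    and x :: "nat \<Rightarrow> real ^ 'd" and y :: "nat \<Rightarrow> real"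
    and l :: "real \<Rightarrow> real"
    and wbar :: "real \<Rightarrow> real ^ 'd" and wreg :: "real ^ 'd"
  assumes p_gt: "p > 1"
    and conj: "1 / p + 1 / q = 1"
    and labels: "\<forall>i<n. y i \<in> {-1, 1}"
    and sep: "lin_separable n x y"
    and bound: "\<forall>i<n. lp_norm q (x i) < C"
    and decr: "antimono l"
    and cvx: "convex_on UNIV l"
    and no_min: "\<forall>t. \<exists>s. l s < l t"
    and inf0: "(INF t. l t) = 0"
    and path: "is_reg_path p (emp_loss l n x y) wbar"
    and dir: "((\<lambda>B. (1 / B) *\<^sub>R wbar B) \<longlongrightarrow> wreg) at_top"
  shows "\<forall>\<alpha>>0. \<exists>r. \<forall>w :: real ^ 'd. lp_norm p w > r \<longrightarrow>
           emp_loss l n x y (((1 + \<alpha>) * lp_norm p w) *\<^sub>R wreg) \<le> emp_loss l n x y w"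
proof (intro allI impI)
  fix \<alpha> :: real assume a0: "\<alpha> > 0"
  show "\<exists>r. \<forall>w :: real ^ 'd. lp_norm p w > r \<longrightarrow>
           emp_loss l n x y (((1 + \<alpha>) * lp_norm p w) *\<^sub>R wreg) \<le> emp_loss l n x y w"
  proof (cases "n = 0")
    case True
    then show ?thesis by (simp add: emp_loss_def)
  next
    case False
    then have npos: "n > 0" by simp
    note ctx = p_gt npos decr cvx no_min path dir
    obtain u \<gamma> where u1: "lp_norm p u \<le> 1" and g0: "\<gamma> > 0" and ug: "\<forall>i<n. \<gamma> \<le> u \<bullet> zz x y i"
      using separator[OF ctx sep] by blast
    show ?thesis
    proof (cases "\<exists>c>0. \<exists>t0. \<forall>t\<ge>t0. c * t \<le> l t - l (2 * t)")
      case True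
      then obtain c t0 where "c > 0" "\<forall>t\<ge>t0. c * t \<le> l t - l (2 * t)" by blast
      then show ?thesis using case_lin[OF ctx u1 g0 ug _ _ a0] by blast
    next
      case nlin: False
      have nonneg: "\<forall>i<n. mm x y wreg i \<ge> 0"
        using nonneg_margin[OF ctx u1 g0 ug nlin] by blast
      show ?thesis
      proof (cases "\<forall>i<n. mm x y wreg i > 0")
        case True
        then show ?thesis using case_pos[OF ctx True a0] by blast
      next
        case False
        then obtain j where j: "j < n" "mm x y wreg j = 0" using nonneg by (auto simp: less_le)
        show ?thesis using case_zero[OF ctx u1 g0 ug j nonneg a0] .
      qed
    qed
  qed
qed


end
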